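(* Suppose $q$ is even. Let $\mathfrak q_1,\dots,\mathfrak q_s$ be distinct primes of $A$ ($s\ge0$), $e_1,\dots,e_s\ge1$, $\mathfrak m=\mathfrak q_1^{2e_1-1}\cdots\mathfrak q_s^{2e_s-1}$, and $\mathfrak n\in A$ coprime to $\mathfrak m$, such that $X^2+X-\mathfrak n/\mathfrak m$ is irreducible over $F$; let $K$ be its splitting field and $\mathcal O_K$ the integral closure of $A$ in $K$. Put $\mathcal D=\mathfrak q_1^{e_1}\cdots\mathfrak q_s^{e_s}$ and fix $\epsilon\in\mathbb F_q^\times$. Let $\alpha\in K$ be a root of $$f(X)=X^2+\epsilon\mathcal D X+\epsilon^2\mathfrak q_1\cdots\mathfrak q_s\mathfrak n.$$ Then $\mathcal O_K=A[\alpha]$.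
   Context: $A=\mathbb F_q[T]$, $F=\mathbb F_q(T)$, with $q$ a power of $2$; primes of $A$ are monic irreducible polynomials. (In the paper, $\mathcal D$ is identified with the different of $\mathcal O_K$ over $A$, and $\alpha=\epsilon\mathcal D\beta$ where $\beta^2+\beta=\mathfrak n/\mathfrak m$.) *)

theory Defs
  imports "HOL-Computational_Algebra.Computational_Algebra"
begin

text \<open>A = k[T] is 'k poly, F = k(T) is 'k poly fract. An extension field of F is
 modelled by a field type 'K together with a ring homomorphism F -> 'K.\<close>

definition is_ring_hom :: "('a::ring_1 \<Rightarrow> 'b::ring_1) \<Rightarrow> bool" where
  "is_ring_hom h \<longleftrightarrow> h 1 = 1 \<and> (\<forall>x y. h (x + y) = h x + h y) \<and> (\<forall>x y. h (x * y) = h x * h y)"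

definition is_subfield :: "'a::field set \<Rightarrow> bool" where
  "is_subfield L \<longleftrightarrow> 0 \<in> L \<and> 1 \<in> L \<and> (\<forall>x\<in>L. \<forall>y\<in>L. x + y \<in> L \<and> x * y \<in> L)
     \<and> (\<forall>x\<in>L. - x \<in> L \<and> inverse x \<in> L)"

definition subfield_generated :: "'a::field set \<Rightarrow> 'a set" where
  "subfield_generated S = \<Inter>{L. S \<subseteq> L \<and> is_subfield L}"

definition splitting_field_in ::
  "('f::field \<Rightarrow> 'K::field) \<Rightarrow> 'f poly \<Rightarrow> 'K set" where
  "splitting_field_in emb g =
     subfield_generated (range emb \<union> {x. poly (map_poly emb g) x = 0})"

definition integral_closure_in :: "('a::comm_ring_1 \<Rightarrow> 'K::field) \<Rightarrow> 'K set \<Rightarrow> 'K set" where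
  "integral_closure_in h K = {x \<in> K. \<exists>p :: 'a poly. lead_coeff p = 1 \<and> poly (map_poly h p) x = 0}"

definition ring_adjoin :: "('a::comm_ring_1 \<Rightarrow> 'K::field) \<Rightarrow> 'K \<Rightarrow> 'K set" where
  "ring_adjoin h \<alpha> = {poly (map_poly h p) \<alpha> | p :: 'a poly. True}"

end

theory Submission
  imports Defs
begin


lemma hom_props:
  fixes h :: "'a::field \<Rightarrow> 'b::field"
  assumes "is_ring_hom h"
  shows hom_0: "h 0 = 0" and hom_1: "h 1 = 1"
    and hom_add: "h (x + y) = h x + h y" and hom_mult: "h (x * y) = h x * h y"
    and hom_uminus: "h (- x) = - h x" and hom_diff: "h (x - y) = h x - h y"
    and hom_eq0: "h x = 0 \<longleftrightarrow> x = 0"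
    and hom_inverse: "h (inverse x) = inverse (h x)"
    and hom_divide: "h (x / y) = h x / h y"
    and hom_power: "h (x ^ k) = h x ^ k"
proof -
  have a: "\<And>x y. h (x + y) = h x + h y" and m: "\<And>x y. h (x * y) = h x * h y" and o: "h 1 = 1"
    using assms unfolding is_ring_hom_def by auto
  show z: "h 0 = 0" using a[of 0 0] by (metis add_cancel_right_right add_0)
  show "h 1 = 1" by (rule o)
  show "h (x + y) = h x + h y" by (rule a)
  show "h (x * y) = h x * h y" by (rule m)
  show u: "\<And>x. h (- x) = - h x" proof - fix x have "h (-x) + h x = 0" using a[of "-x" x] z by simp thus "h (-x) = - h x" by (simp add: eq_neg_iff_add_eq_0) qed
  show "h (x - y) = h x - h y" by (metis a u diff_conv_add_uminus)
  have inv: "\<And>x. x \<noteq> 0 \<Longrightarrow> h x * h (inverse x) = 1" using m o by (metis right_inverse)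
  show e: "h x = 0 \<longleftrightarrow> x = 0"
  proof
    assume "h x = 0" thus "x = 0" using inv[of x] by (cases "x = 0") auto
  qed (simp add: z)
  show i: "\<And>x. h (inverse x) = inverse (h x)"
  proof -
    fix x show "h (inverse x) = inverse (h x)"
    proof (cases "x = 0")
      case True thus ?thesis by (simp add: z)
    next
      case False thus ?thesis using inv[of x] inverse_unique by metis
    qed
  qed
  show "h (x / y) = h x / h y" using m i by (simp add: divide_inverse)
  show "h (x ^ k) = h x ^ k" by (induction k) (simp_all add: o m)
qed

lemma map_hom_add:
  fixes h :: "'a::field \<Rightarrow> 'b::field"
  assumes "is_ring_hom h" shows "map_poly h (p + q) = map_poly h p + map_poly h q"
  by (rule poly_eqI) (simp add: coeff_map_poly hom_0[OF assms] hom_add[OF assms])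

lemma map_hom_smult:
  fixes h :: "'a::field \<Rightarrow> 'b::field"
  assumes "is_ring_hom h" shows "map_poly h (smult a p) = smult (h a) (map_poly h p)"
  by (rule poly_eqI) (simp add: coeff_map_poly hom_0[OF assms] hom_mult[OF assms])

lemma map_hom_pCons:
  fixes h :: "'a::field \<Rightarrow> 'b::field"
  assumes "is_ring_hom h" shows "map_poly h (pCons a p) = pCons (h a) (map_poly h p)"
  by (rule map_poly_pCons) (simp add: hom_0[OF assms])

lemma map_hom_const:
  fixes h :: "'a::field \<Rightarrow> 'b::field"
  assumes "is_ring_hom h" shows "map_poly h [:a:] = [:h a:]"
  by (simp add: map_hom_pCons[OF assms] hom_0[OF assms])

lemma map_hom_mult:
  fixes h :: "'a::field \<Rightarrow> 'b::field"
  assumes "is_ring_hom h" shows "map_poly h (p * q) = map_poly h p * map_poly h q"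
proof (induction p)
  case 0 thus ?case by simp
next
  case (pCons a p)
  have "map_poly h (pCons a p * q) = map_poly h (smult a q + pCons 0 (p * q))" by simp
  also have "\<dots> = smult (h a) (map_poly h q) + pCons 0 (map_poly h p * map_poly h q)"
    by (simp add: map_hom_add[OF assms] map_hom_smult[OF assms] map_hom_pCons[OF assms] hom_0[OF assms] pCons.IH)
  also have "\<dots> = map_poly h (pCons a p) * map_poly h q"
    by (simp add: map_hom_pCons[OF assms])
  finally show ?case .
qed

lemma map_hom_uminus:
  fixes h :: "'a::field \<Rightarrow> 'b::field"
  assumes "is_ring_hom h" shows "map_poly h (- p) = - map_poly h p"
  by (rule poly_eqI) (simp add: coeff_map_poly hom_0[OF assms] hom_uminus[OF assms])

lemma map_hom_diff:
  fixes h :: "'a::field \<Rightarrow> 'b::field"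
  assumes "is_ring_hom h" shows "map_poly h (p - q) = map_poly h p - map_poly h q"
  by (rule poly_eqI) (simp add: coeff_map_poly hom_0[OF assms] hom_diff[OF assms])

lemma ev_hom:
  fixes h :: "'a::field \<Rightarrow> 'b::field"
  assumes "is_ring_hom h" shows "poly (map_poly h p) (h x) = h (poly p x)"
proof (induction p)
  case 0 thus ?case by (simp add: hom_0[OF assms])
next
  case (pCons a p) thus ?case by (simp add: map_hom_pCons[OF assms] hom_add[OF assms] hom_mult[OF assms])
qed


lemma irr_factor:
  fixes d :: "'k::field poly"
  assumes "d \<noteq> 0" "\<not> is_unit d"
  shows "\<exists>\<pi>. prime_elem \<pi> \<and> \<pi> dvd d"
  using assms
proof (induction "degree d" arbitrary: d rule: less_induct)
  case less
  show ?case
  proof (cases "irreducible d")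
    case True
    hence "prime_elem d" by (rule field_poly_irreducible_imp_prime)
    thus ?thesis by (intro exI[of _ d]) simp
  next
    case False
    then obtain a b where ab: "d = a * b" "\<not> is_unit a" "\<not> is_unit b"
      using less.prems unfolding irreducible_def by auto
    have a0: "a \<noteq> 0" "b \<noteq> 0" using ab less.prems by auto
    have "degree b \<noteq> 0" using ab(3) is_unit_iff_degree[OF a0(2)] by simp
    hence "degree a < degree d" using ab(1) a0 by (simp add: degree_mult_eq)
    then obtain \<pi> where "prime_elem \<pi>" "\<pi> dvd a" using less.hyps[OF _ a0(1) ab(2)] by blast
    thus ?thesis using ab(1) by (metis dvd_mult2)
  qed
qed

lemma prime_degree_pos:
  fixes p :: "'k::field poly"
  assumes "prime_elem p" shows "degree p > 0"
proof -
  have "p \<noteq> 0" using assms by (simp add: prime_elem_def)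
  thus ?thesis using assms is_unit_iff_degree[OF \<open>p \<noteq> 0\<close>] prime_elem_not_unit by auto
qed

lemma map_to_fract_pCons: "map_poly to_fract (pCons a p) = pCons (to_fract a) (map_poly to_fract p)"
  by (rule map_poly_pCons) simp

lemma denom_exists:
  fixes h :: "'k::field poly fract poly"
  shows "\<exists>d H. d \<noteq> 0 \<and> map_poly to_fract H = smult (to_fract d) h"
proof (induction h)
  case 0 show ?case by (intro exI[of _ 1] exI[of _ 0]) simp
next
  case (pCons z h)
  then obtain d H where dH: "d \<noteq> 0" "map_poly to_fract H = smult (to_fract d) h" by blast
  obtain a b where z: "z = Fract a b" "b \<noteq> 0" by (cases z)
  have zb: "to_fract b * z = to_fract a" using z by (simp add: Fract_conv_to_fract)
  show ?case
  proof (intro exI conjI)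
    show "d * b \<noteq> 0" using dH z by simp
    show "map_poly to_fract (pCons (a * d) (smult b H)) = smult (to_fract (d * b)) (pCons z h)"
      using dH zb by (simp add: map_to_fract_pCons map_poly_smult ac_simps)
  qed
qed

lemma content_prime:
  fixes H G :: "'k::field poly poly" and \<pi> :: "'k poly"
  assumes p: "prime_elem \<pi>" and all: "\<forall>n. \<pi> dvd coeff (H * G) n"
  shows "(\<forall>i. \<pi> dvd coeff H i) \<or> (\<forall>j. \<pi> dvd coeff G j)"
proof (rule ccontr)
  assume "\<not> ?thesis"
  then obtain i1 j1 where "\<not> \<pi> dvd coeff H i1" "\<not> \<pi> dvd coeff G j1" by blast
  define i0 where "i0 = (LEAST i. \<not> \<pi> dvd coeff H i)"
  define j0 where "j0 = (LEAST j. \<not> \<pi> dvd coeff G j)"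
  have i0: "\<not> \<pi> dvd coeff H i0" "\<And>i. i < i0 \<Longrightarrow> \<pi> dvd coeff H i"
    unfolding i0_def using \<open>\<not> \<pi> dvd coeff H i1\<close> by (metis LeastI not_less_Least)+
  have j0: "\<not> \<pi> dvd coeff G j0" "\<And>j. j < j0 \<Longrightarrow> \<pi> dvd coeff G j"
    unfolding j0_def using \<open>\<not> \<pi> dvd coeff G j1\<close> by (metis LeastI not_less_Least)+
  define n where "n = i0 + j0"
  have "coeff (H * G) n = (\<Sum>i\<le>n. coeff H i * coeff G (n - i))" by (rule coeff_mult)
  also have "\<dots> = coeff H i0 * coeff G (n - i0) + (\<Sum>i\<in>{..n} - {i0}. coeff H i * coeff G (n - i))"
    by (rule sum.remove) (auto simp: n_def)
  finally have eq: "coeff (H * G) n = coeff H i0 * coeff G j0 + (\<Sum>i\<in>{..n} - {i0}. coeff H i * coeff G (n - i))"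
    by (simp add: n_def)
  have "\<pi> dvd (\<Sum>i\<in>{..n} - {i0}. coeff H i * coeff G (n - i))"
  proof (rule dvd_sum)
    fix i assume "i \<in> {..n} - {i0}"
    hence "i < i0 \<or> (i > i0 \<and> n - i < j0)" by (auto simp: n_def)
    thus "\<pi> dvd coeff H i * coeff G (n - i)"
    proof
      assume "i < i0" thus ?thesis using i0(2) dvd_mult2 by blast
    next
      assume "i0 < i \<and> n - i < j0" thus ?thesis using j0(2) dvd_mult by blast
    qed
  qed
  moreover have "\<pi> dvd coeff H i0 * coeff G j0 + (\<Sum>i\<in>{..n} - {i0}. coeff H i * coeff G (n - i))"
    using all eq by metis
  ultimately have "\<pi> dvd coeff H i0 * coeff G j0" using dvd_add_left_iff by blast
  thus False using p i0 j0 prime_elem_dvd_mult_iff by blast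
qed

lemma reduce_denom:
  fixes h :: "'k::field poly fract poly" and H :: "'k poly poly"
  assumes hm: "lead_coeff h = 1" and H: "map_poly to_fract H = smult (to_fract d) h"
    and dv: "\<forall>i. \<pi> dvd coeff H i" and p: "prime_elem \<pi>"
  shows "\<exists>d1 H1. d = \<pi> * d1 \<and> map_poly to_fract H1 = smult (to_fract d1) h"
proof -
  have "to_fract (coeff H (degree h)) = to_fract d"
    using arg_cong[OF H, of "\<lambda>p. coeff p (degree h)"] hm by (simp add: coeff_map_poly)
  hence "coeff H (degree h) = d" by simp
  hence "\<pi> dvd d" using dv by metis
  then obtain d1 where d1: "d = \<pi> * d1" by (elim dvdE)
  define H1 where "H1 = map_poly (\<lambda>c. c div \<pi>) H"
  have p0: "\<pi> \<noteq> 0" using p by auto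
  have cH: "coeff H i = \<pi> * coeff H1 i" for i
    using dv unfolding H1_def by (simp add: coeff_map_poly)
  have "map_poly to_fract H1 = smult (to_fract d1) h"
  proof (rule poly_eqI)
    fix i
    have "to_fract (coeff H i) = to_fract d * coeff h i"
      using arg_cong[OF H, of "\<lambda>p. coeff p i"] by (simp add: coeff_map_poly)
    hence "to_fract \<pi> * to_fract (coeff H1 i) = to_fract \<pi> * (to_fract d1 * coeff h i)"
      by (simp add: cH d1 ac_simps)
    thus "coeff (map_poly to_fract H1) i = coeff (smult (to_fract d1) h) i"
      using p0 by (simp add: coeff_map_poly)
  qed
  thus ?thesis using d1 by blast
qed

lemma gauss_monic:
  fixes p :: "'k::field poly poly" and h q :: "'k poly fract poly"
  assumes pm: "lead_coeff p = 1" and hm: "lead_coeff h = 1" and eq: "map_poly to_fract p = h * q"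
  shows "\<forall>i. coeff h i \<in> range to_fract"
proof -
  have p0: "p \<noteq> 0" using pm by auto
  have q0: "q \<noteq> 0" using eq p0 by auto
  have "lead_coeff (map_poly to_fract p) = 1" using pm by (simp add: degree_map_poly coeff_map_poly)
  hence qm: "lead_coeff q = 1" using eq hm by (simp add: lead_coeff_mult)
  define Good where "Good = (\<lambda>(d, e). d \<noteq> 0 \<and> e \<noteq> 0 \<and>
     (\<exists>H. map_poly to_fract H = smult (to_fract d) h) \<and> (\<exists>G. map_poly to_fract G = smult (to_fract e) q))"
  obtain d0 e0 where "Good (d0, e0)" using denom_exists[of h] denom_exists[of q] unfolding Good_def by auto
  then obtain de where de: "Good de" and mn: "\<forall>y. Good y \<longrightarrow> degree (fst de * snd de) \<le> degree (fst y * snd y)"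
    using ex_has_least_nat[of Good "(d0, e0)" "\<lambda>y. degree (fst y * snd y)"] by blast
  obtain d e where dee: "de = (d, e)" by (cases de)
  obtain H G where d0: "d \<noteq> 0" and e0: "e \<noteq> 0" and H: "map_poly to_fract H = smult (to_fract d) h"
    and G: "map_poly to_fract G = smult (to_fract e) q" using de unfolding dee Good_def by auto
  show ?thesis
  proof (cases "is_unit (d * e)")
    case True
    hence du: "is_unit d" using is_unit_mult_iff by blast
    show ?thesis
    proof
      fix i
      obtain z where z: "coeff H i = d * z" using du unit_imp_dvd by (metis dvdE)
      have "to_fract (coeff H i) = to_fract d * coeff h i"
        using arg_cong[OF H, of "\<lambda>p. coeff p i"] by (simp add: coeff_map_poly)
      hence "coeff h i = to_fract z" using d0 by (simp add: z)
      thus "coeff h i \<in> range to_fract" by simp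
    qed
  next
    case False
    then obtain \<pi> where pr: "prime_elem \<pi>" "\<pi> dvd d * e" using irr_factor[of "d * e"] d0 e0 by auto
    have "map_poly to_fract (H * G) = map_poly to_fract (smult (d * e) p)"
      by (simp add: fract_poly_mult H G eq ac_simps)
    hence HG: "H * G = smult (d * e) p" using fract_poly_eq_iff by blast
    have "\<forall>n. \<pi> dvd coeff (H * G) n" using pr(2) by (simp add: HG)
    hence cases: "(\<forall>i. \<pi> dvd coeff H i) \<or> (\<forall>j. \<pi> dvd coeff G j)" using content_prime pr(1) by blast
    have dp: "degree \<pi> > 0" using prime_degree_pos pr(1) by blast
    have p00: "\<pi> \<noteq> 0" using pr by auto
    show ?thesis
    proof (cases "\<forall>i. \<pi> dvd coeff H i")
      case True
      then obtain d1 H1 where d1: "d = \<pi> * d1" "map_poly to_fract H1 = smult (to_fract d1) h"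
        using reduce_denom[OF hm H _ pr(1)] by blast
      have "d1 \<noteq> 0" using d0 d1 by auto
      hence "Good (d1, e)" using d1 e0 G unfolding Good_def by auto
      hence "degree (d * e) \<le> degree (d1 * e)" using mn[rule_format, of "(d1, e)"] dee by simp
      moreover have "degree (d * e) = degree \<pi> + degree (d1 * e)"
        using d1 \<open>d1 \<noteq> 0\<close> e0 p00 by (simp add: degree_mult_eq ac_simps)
      ultimately show ?thesis using dp by simp
    next
      case False
      hence "\<forall>j. \<pi> dvd coeff G j" using cases by blast
      then obtain e1 G1 where e1: "e = \<pi> * e1" "map_poly to_fract G1 = smult (to_fract e1) q"
        using reduce_denom[OF qm G _ pr(1)] by blast
      have "e1 \<noteq> 0" using e0 e1 by auto
      hence "Good (d, e1)" using e1 d0 H unfolding Good_def by auto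
      hence "degree (d * e) \<le> degree (d * e1)" using mn[rule_format, of "(d, e1)"] dee by simp
      moreover have "degree (d * e) = degree \<pi> + degree (d * e1)"
        using e1 \<open>e1 \<noteq> 0\<close> d0 p00 by (simp add: degree_mult_eq ac_simps)
      ultimately show ?thesis using dp by simp
    qed
  qed
qed




lemma minrep:
  fixes u w :: "'k::field poly fract"
  shows "\<exists>a b d. d \<noteq> 0 \<and> u = to_fract a / to_fract d \<and> w = to_fract b / to_fract d \<and>
     (\<forall>\<pi>. prime_elem \<pi> \<longrightarrow> \<pi> dvd a \<longrightarrow> \<pi> dvd b \<longrightarrow> \<not> \<pi> dvd d)"
proof -
  define R where "R = (\<lambda>(a, b, d). d \<noteq> 0 \<and> u = to_fract a / to_fract d \<and> w = to_fract b / to_fract d)"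
  obtain a1 d1 where 1: "u = Fract a1 d1" "d1 \<noteq> 0" by (cases u)
  obtain b2 d2 where 2: "w = Fract b2 d2" "d2 \<noteq> 0" by (cases w)
  have "R (a1 * d2, b2 * d1, d1 * d2)" using 1 2 unfolding R_def
    by (simp add: Fract_conv_to_fract field_simps)
  then obtain t where t: "R t" and mn: "\<forall>y. R y \<longrightarrow> degree (snd (snd t)) \<le> degree (snd (snd y))"
    using ex_has_least_nat[of R _ "\<lambda>y. degree (snd (snd y))"] by blast
  obtain a b d where abd: "t = (a, b, d)" by (cases t)
  have Rt: "d \<noteq> 0" "u = to_fract a / to_fract d" "w = to_fract b / to_fract d" using t abd R_def by auto
  show ?thesis
  proof (intro exI conjI allI impI)
    show "d \<noteq> 0" "u = to_fract a / to_fract d" "w = to_fract b / to_fract d" by (fact Rt)+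
    fix \<pi> assume p: "prime_elem \<pi>" "\<pi> dvd a" "\<pi> dvd b"
    show "\<not> \<pi> dvd d"
    proof
      assume "\<pi> dvd d"
      then obtain a' b' d' where e: "a = \<pi> * a'" "b = \<pi> * b'" "d = \<pi> * d'" using p by (meson dvdE)
      have p0: "\<pi> \<noteq> 0" using p by auto
      have "R (a', b', d')" unfolding R_def using Rt e p0 by simp
      hence "degree d \<le> degree d'" using mn[rule_format, of "(a', b', d')"] abd by simp
      moreover have "degree d = degree \<pi> + degree d'" using e Rt p0 by (simp add: degree_mult_eq)
      ultimately show False using prime_degree_pos[OF p(1)] by simp
    qed
  qed
qed

lemma key_arith:
  fixes a b d \<delta> \<gamma> :: "'k::field poly"
  assumes d0: "d \<noteq> 0"
    and cop: "\<forall>\<pi>. prime_elem \<pi> \<longrightarrow> \<pi> dvd a \<longrightarrow> \<pi> dvd b \<longrightarrow> \<not> \<pi> dvd d"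
    and h1: "d dvd \<delta> * b" and h2: "d^2 dvd a^2 - a * b * \<delta> - b^2 * \<gamma>"
    and ram: "\<forall>\<pi>. prime_elem \<pi> \<longrightarrow> \<pi> dvd \<delta> \<longrightarrow> \<pi> dvd \<gamma> \<and> \<not> \<pi>^2 dvd \<gamma>"
  shows "is_unit d"
proof (rule ccontr)
  assume "\<not> is_unit d"
  then obtain \<pi> where p: "prime_elem \<pi>" "\<pi> dvd d" using irr_factor d0 by blast
  have pd2: "\<pi> dvd d^2" using p(2) by (simp add: power2_eq_square)
  hence pe: "\<pi> dvd a^2 - a * b * \<delta> - b^2 * \<gamma>" using h2 dvd_trans by blast
  show False
  proof (cases "\<pi> dvd \<delta>")
    case False
    have "\<pi> dvd \<delta> * b" using p(2) h1 dvd_trans by blast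
    hence pb: "\<pi> dvd b" using False p(1) prime_elem_dvd_mult_iff by blast
    have "\<pi> dvd a * b * \<delta> + b^2 * \<gamma>" using pb by (simp add: power2_eq_square)
    hence "\<pi> dvd (a^2 - a * b * \<delta> - b^2 * \<gamma>) + (a * b * \<delta> + b^2 * \<gamma>)" using pe dvd_add by blast
    hence "\<pi> dvd a^2" by (simp add: algebra_simps)
    hence "\<pi> dvd a" using p(1) prime_elem_dvd_power by blast
    thus False using cop p pb by blast
  next
    case True
    have pg: "\<pi> dvd \<gamma>" "\<not> \<pi>^2 dvd \<gamma>" using ram p(1) True by auto
    have "\<pi> dvd a * b * \<delta> + b^2 * \<gamma>" using True pg by simp
    hence "\<pi> dvd (a^2 - a * b * \<delta> - b^2 * \<gamma>) + (a * b * \<delta> + b^2 * \<gamma>)" using pe dvd_add by blast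
    hence "\<pi> dvd a^2" by (simp add: algebra_simps)
    hence pa: "\<pi> dvd a" using p(1) prime_elem_dvd_power by blast
    hence npb: "\<not> \<pi> dvd b" using cop p by blast
    have "\<pi>^2 dvd a^2" using pa by (simp add: dvd_power_same)
    moreover have "\<pi>^2 dvd a * b * \<delta>" using pa True by (simp add: power2_eq_square mult_dvd_mono)
    moreover have "\<pi>^2 dvd a^2 - a * b * \<delta> - b^2 * \<gamma>"
      using h2 p(2) by (meson dvd_power_same dvd_trans)
    ultimately have "\<pi>^2 dvd (a^2 - a * b * \<delta>) - (a^2 - a * b * \<delta> - b^2 * \<gamma>)"
      using dvd_diff by blast
    hence "\<pi>^2 dvd b^2 * \<gamma>" by (simp add: algebra_simps)
    note pbg = this
    have nb2: "\<not> \<pi> dvd b^2" using npb p(1) prime_elem_dvd_power by blast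
    have "\<pi> dvd b^2 * \<gamma>" using pbg by (metis dvd_power dvd_trans zero_less_numeral)
    hence "\<pi> dvd \<gamma>" using nb2 p(1) prime_elem_dvd_mult_iff by blast
    then obtain g1 where g1: "\<gamma> = \<pi> * g1" by (elim dvdE)
    have p0: "\<pi> \<noteq> 0" using p by auto
    have "\<pi> * \<pi> dvd \<pi> * (b^2 * g1)" using pbg g1 by (simp add: power2_eq_square ac_simps)
    hence "\<pi> dvd b^2 * g1" using p0 by simp
    hence "\<pi> dvd g1" using nb2 p(1) prime_elem_dvd_mult_iff by blast
    hence "\<pi>^2 dvd \<gamma>" using g1 by (simp add: power2_eq_square)
    thus False using pg by blast
  qed
qed




lemma prime_dvd_prod_ex:
  fixes f :: "nat \<Rightarrow> 'k::field poly"
  assumes p: "prime_elem \<pi>" and fin: "finite A"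
  shows "\<pi> dvd prod f A \<Longrightarrow> \<exists>x\<in>A. \<pi> dvd f x"
  using fin
proof (induction A rule: finite_induct)
  case empty thus ?case using p prime_elem_not_unit by auto
next
  case (insert x A)
  hence "\<pi> dvd f x * prod f A" by simp
  thus ?case using insert p prime_elem_dvd_mult_iff by blast
qed

lemma unit_const_poly:
  fixes k :: "'k::field poly"
  assumes "is_unit k" obtains k0 where "k = [:k0:]" "k0 \<noteq> 0"
  using assms is_unit_poly_iff by (metis dvd_0_left_iff zero_neq_one)

lemma ram_cond:
  fixes Q :: "nat \<Rightarrow> 'k::field poly" and n :: "'k poly" and \<epsilon> :: 'k
  assumes primes: "\<forall>i<s. lead_coeff (Q i) = 1 \<and> irreducible (Q i)"
    and distinct: "inj_on Q {..<s}"
    and e_pos: "\<forall>i<s. e i \<ge> 1"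
    and cop: "coprime n (\<Prod>i<s. Q i ^ (2 * e i - 1))"
    and eps: "\<epsilon> \<noteq> 0"
    and p: "prime_elem \<pi>" and pd: "\<pi> dvd [:\<epsilon>:] * (\<Prod>i<s. Q i ^ e i)"
  shows "\<pi> dvd [:\<epsilon>^2:] * (\<Prod>i<s. Q i) * n \<and> \<not> \<pi>^2 dvd [:\<epsilon>^2:] * (\<Prod>i<s. Q i) * n"
proof -
  have pu: "\<not> \<pi> dvd [:c:]" if "c \<noteq> 0" for c :: 'k
  proof
    assume "\<pi> dvd [:c:]"
    moreover have "c dvd 1" using that by (metis dvdI right_inverse)
    hence "is_unit [:c:]" by (simp add: is_unit_poly_iff)
    ultimately have "is_unit \<pi>" using dvd_unit_imp_unit by blast
    thus False using p prime_elem_not_unit by blast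
  qed
  have "\<pi> dvd (\<Prod>i<s. Q i ^ e i)" using pd pu[OF eps] p prime_elem_dvd_mult_iff by blast
  then obtain i where i: "i < s" "\<pi> dvd Q i ^ e i" using prime_dvd_prod_ex[OF p] by blast
  hence piQ: "\<pi> dvd Q i" using p prime_elem_dvd_power by blast
  then obtain k where k: "Q i = \<pi> * k" by (elim dvdE)
  have ku: "is_unit k" using primes i(1) k p prime_elem_not_unit by (metis irreducibleD)
  have p0: "\<pi> \<noteq> 0" using p by auto
  have QP: "Q i dvd (\<Prod>i<s. Q i)" using i(1) by (intro dvd_prodI) auto
  show ?thesis
  proof
    show "\<pi> dvd [:\<epsilon>^2:] * (\<Prod>i<s. Q i) * n" using piQ QP
      by (metis dvd_trans dvd_mult dvd_mult2)
  next
    show "\<not> \<pi>^2 dvd [:\<epsilon>^2:] * (\<Prod>i<s. Q i) * n"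
    proof
      assume a: "\<pi>^2 dvd [:\<epsilon>^2:] * (\<Prod>i<s. Q i) * n"
      define R where "R = (\<Prod>j\<in>{..<s} - {i}. Q j)"
      have PR: "(\<Prod>i<s. Q i) = Q i * R" unfolding R_def using i(1) by (intro prod.remove) auto
      have "\<pi> * \<pi> dvd \<pi> * ([:\<epsilon>^2:] * k * R * n)" using a by (simp add: PR k power2_eq_square ac_simps)
      hence "\<pi> dvd [:\<epsilon>^2:] * k * R * n" using p0 dvd_mult_cancel_left by metis
      moreover have "\<not> \<pi> dvd [:\<epsilon>^2:]" using pu eps by simp
      moreover have "\<not> \<pi> dvd k" using ku p prime_elem_not_unit dvd_unit_imp_unit by blast
      ultimately have "\<pi> dvd R \<or> \<pi> dvd n" using p prime_elem_dvd_mult_iff by metis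
      thus False
      proof
        assume "\<pi> dvd n"
        moreover have "Q i dvd Q i ^ (2 * e i - 1)" using e_pos i(1)
          by (intro dvd_power) auto
        hence "Q i dvd (\<Prod>i<s. Q i ^ (2 * e i - 1))" using i(1) dvd_prodI[of "{..<s}" i]
          by (metis (no_types, lifting) dvd_trans finite_lessThan lessThan_iff)
        hence "\<pi> dvd (\<Prod>i<s. Q i ^ (2 * e i - 1))" using piQ dvd_trans by blast
        ultimately have "is_unit \<pi>" using cop coprime_common_divisor by blast
        thus False using p prime_elem_not_unit by blast
      next
        assume "\<pi> dvd R"
        then obtain j where j: "j \<in> {..<s} - {i}" "\<pi> dvd Q j"
          unfolding R_def using prime_dvd_prod_ex[OF p] by blast
        then obtain k' where k': "Q j = \<pi> * k'" by (elim dvdE)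
        have ku': "is_unit k'" using primes j(1) k' p prime_elem_not_unit by (metis irreducibleD DiffD1 lessThan_iff)
        obtain k0 where k0: "k = [:k0:]" "k0 \<noteq> 0" using unit_const_poly[OF ku] .
        obtain k1 where k1: "k' = [:k1:]" "k1 \<noteq> 0" using unit_const_poly[OF ku'] .
        have "lead_coeff (Q i) = 1" "lead_coeff (Q j) = 1" using primes i(1) j(1) by auto
        note lQ = this
        have "lead_coeff \<pi> * k0 = 1" using lQ k k0 by (simp add: lead_coeff_smult mult.commute)
        moreover have "lead_coeff \<pi> * k1 = 1" using lQ k' k1 by (simp add: lead_coeff_smult mult.commute)
        ultimately have "k0 = k1" by (metis mult_left_cancel zero_neq_one mult_zero_left)
        hence "Q i = Q j" using k k' k0 k1 by simp
        hence "i = j" using distinct i(1) j(1) by (auto dest: inj_onD)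
        thus False using j(1) by simp
      qed
    qed
  qed
qed




locale L5 =
  fixes E :: "'k::{field,finite} poly fract \<Rightarrow> 'K::field"
    and s :: nat and Q :: "nat \<Rightarrow> 'k poly" and e :: "nat \<Rightarrow> nat"
    and n :: "'k poly" and \<epsilon> :: 'k and \<alpha> :: 'K
  assumes char2: "CHAR('k) = 2"
    and primes: "\<forall>i<s. lead_coeff (Q i) = 1 \<and> irreducible (Q i)"
    and distinct: "inj_on Q {..<s}"
    and e_pos: "\<forall>i<s. e i \<ge> 1"
    and coprime: "coprime n (\<Prod>i<s. Q i ^ (2 * e i - 1))"
    and irred: "irreducible [: - (to_fract n / to_fract (\<Prod>i<s. Q i ^ (2 * e i - 1))), 1, 1 :]"
    and hom: "is_ring_hom E"
    and eps: "\<epsilon> \<noteq> 0"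
    and root: "poly (map_poly (E \<circ> to_fract)
                 [: [:\<epsilon>\<^sup>2:] * (\<Prod>i<s. Q i) * n, [:\<epsilon>:] * (\<Prod>i<s. Q i ^ e i), 1 :]) \<alpha> = 0"
begin

definition "mm = (\<Prod>i<s. Q i ^ (2 * e i - 1))"
definition "PP = (\<Prod>i<s. Q i)"
definition "DD = (\<Prod>i<s. Q i ^ e i)"
definition "c = to_fract n / to_fract mm"
definition "g = [: -c, 1, 1:]"
definition "dl = [:\<epsilon>:] * DD"
definition "gm = [:\<epsilon>\<^sup>2:] * PP * n"
definition "\<delta> = to_fract dl"
definition "\<gamma> = to_fract gm"
definition "\<beta> = \<alpha> / E \<delta>"

lemmas Eh = hom_0[OF hom] hom_1[OF hom] hom_add[OF hom] hom_mult[OF hom] hom_uminus[OF hom]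
  hom_diff[OF hom] hom_eq0[OF hom] hom_inverse[OF hom] hom_divide[OF hom] hom_power[OF hom]

lemma two_k: "(1::'k) + 1 = 0"
proof -
  have "(of_nat CHAR('k) :: 'k) = 0" by simp
  hence "(of_nat 2 :: 'k) = 0" using char2 by simp
  thus ?thesis by simp
qed

lemma two_F: "(x::'k poly fract) + x = 0"
proof -
  have "(of_nat 2 :: 'k) = 0" using char2 by (metis of_nat_CHAR)
  hence "[:(of_nat 2 :: 'k):] = 0" by simp
  hence "(of_nat 2 :: 'k poly) = 0" by (simp only: of_nat_poly)
  hence p2: "(1::'k poly) + 1 = 0" by simp
  have "(1::'k poly fract) + 1 = to_fract 1 + to_fract 1" by simp
  also have "\<dots> = to_fract ((1::'k poly) + 1)" by (simp only: to_fract_add)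
  also have "\<dots> = 0" by (simp only: p2 to_fract_0)
  finally have "(1::'k poly fract) + 1 = 0" .
  hence "(1 + 1) * x = 0" by simp
  thus ?thesis by (simp add: distrib_right)
qed

lemma Q0: "i < s \<Longrightarrow> Q i \<noteq> 0" using primes by auto

lemma mm0: "mm \<noteq> 0" unfolding mm_def using Q0 by (simp add: prod_zero_iff)

lemma DD_sq: "DD^2 = PP * mm"
proof -
  have "DD^2 = (\<Prod>i<s. Q i ^ e i * Q i ^ e i)"
    unfolding DD_def by (simp add: power2_eq_square prod.distrib)
  also have "\<dots> = (\<Prod>i<s. Q i * Q i ^ (2 * e i - 1))"
  proof (rule prod.cong)
    fix i assume "i \<in> {..<s}"
    hence "e i + e i = Suc (2 * e i - 1)" using e_pos by auto
    thus "Q i ^ e i * Q i ^ e i = Q i * Q i ^ (2 * e i - 1)" by (metis power_Suc power_add)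
  qed simp
  also have "\<dots> = PP * mm" unfolding PP_def mm_def by (simp add: prod.distrib)
  finally show ?thesis .
qed

lemma DD0: "DD \<noteq> 0" unfolding DD_def using Q0 by (simp add: prod_zero_iff)
lemma dl0: "dl \<noteq> 0" unfolding dl_def using DD0 eps by simp
lemma Ed0: "E \<delta> \<noteq> 0" unfolding \<delta>_def using dl0 Eh by simp

lemma gm_eq: "\<gamma> = \<delta>^2 * c"
proof -
  have "dl * dl * n = gm * mm" unfolding dl_def gm_def
    using DD_sq[unfolded power2_eq_square] by (simp add: power_mult_distrib ac_simps power2_eq_square)
  hence "to_fract (dl * dl * n) = to_fract (gm * mm)" by simp
  hence "to_fract dl * to_fract dl * to_fract n = to_fract gm * to_fract mm"
    by (simp only: to_fract_mult)
  thus ?thesis unfolding \<gamma>_def \<delta>_def c_def using mm0 by (simp add: field_simps power2_eq_square)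
qed

lemma map_Et_pCons: "map_poly (E \<circ> to_fract) (pCons a p) = pCons (E (to_fract a)) (map_poly (E \<circ> to_fract) p)"
  using map_poly_pCons[of "E \<circ> to_fract" a p] by (simp add: Eh)

lemma root': "E \<gamma> + \<alpha> * (E \<delta> + \<alpha>) = 0"
  using root unfolding \<gamma>_def \<delta>_def gm_def dl_def PP_def DD_def
  by (simp add: map_Et_pCons Eh)

lemma alpha_eq: "\<alpha> = E \<delta> * \<beta>" unfolding \<beta>_def using Ed0 by simp

lemma beta_rel: "\<beta> * \<beta> = E c - \<beta>"
proof -
  have H1: "E \<gamma> = E \<delta> * E \<delta> * E c" unfolding gm_eq by (simp only: Eh power2_eq_square)
  have "E \<delta> * (E \<delta> * (\<beta> * \<beta> + \<beta> + E c)) = 0"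
    using root' H1 alpha_eq by algebra
  hence "\<beta> * \<beta> + \<beta> + E c = 0" using Ed0 by simp
  moreover have "E c + E c = 0"
  proof -
    have "E c + E c = E (c + c)" by (simp only: Eh(3))
    also have "\<dots> = 0" by (simp only: two_F Eh(1))
    finally show ?thesis .
  qed
  ultimately show ?thesis by algebra
qed

lemma g_alt: "g = [: - (to_fract n / to_fract (\<Prod>i<s. Q i ^ (2 * e i - 1))), 1, 1 :]"
  unfolding g_def c_def mm_def ..

lemma g_irr: "irreducible g" using irred g_alt by simp

lemma g_noroot: "poly g r \<noteq> 0"
proof
  assume "poly g r = 0"
  hence "[:-r, 1:] dvd g" using poly_eq_0_iff_dvd by blast
  then obtain k where k: "g = [:-r, 1:] * k" by (elim dvdE)
  have g0: "g \<noteq> 0" unfolding g_def by simp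
  hence k0: "k \<noteq> 0" using k by auto
  have "degree g = 2" unfolding g_def by simp
  moreover have "degree g = degree [:-r, 1:] + degree k" unfolding k by (rule degree_mult_eq) (use k0 in auto)
  ultimately have "degree k = 1" by simp
  moreover have "is_unit [:-r, 1:] \<or> is_unit k" using g_irr k irreducibleD by blast
  ultimately have "is_unit k" using is_unit_iff_degree[of "[:-r, 1:]"] by simp
  thus False using is_unit_iff_degree[OF k0] \<open>degree k = 1\<close> by simp
qed

lemma ev_g: "poly (map_poly E g) y = - E c + y * (1 + y)"
  unfolding g_def by (simp add: map_hom_pCons[OF hom] Eh)

lemma indep: "E a + E b * \<beta> = 0 \<Longrightarrow> a = 0 \<and> b = 0"
proof -
  assume h: "E a + E b * \<beta> = 0"
  show ?thesis
  proof (cases "b = 0")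
    case True thus ?thesis using h by (simp add: Eh)
  next
    case False
    hence Eb: "E b \<noteq> 0" by (simp add: Eh)
    have "E b * \<beta> = - E a" using h by algebra
    hence "\<beta> = - E a / E b" using Eb by (simp add: field_simps)
    hence b: "\<beta> = E (- a / b)" by (simp add: Eh)
    have "E (poly g (- a / b)) = poly (map_poly E g) (E (- a / b))" by (simp add: ev_hom[OF hom])
    also have "\<dots> = - E c + \<beta> * (1 + \<beta>)" using b ev_g by simp
    also have "\<dots> = 0" using beta_rel by algebra
    finally show ?thesis using g_noroot by (simp add: Eh)
  qed
qed

definition "TT = {x. \<exists>u v. x = E u + E v * \<beta>}"

lemma TT_mult: "(E u1 + E v1 * \<beta>) * (E u2 + E v2 * \<beta>) = E (u1 * u2 + v1 * v2 * c) + E (u1 * v2 + u2 * v1 - v1 * v2) * \<beta>"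
proof -
  have "E (u1 * u2 + v1 * v2 * c) + E (u1 * v2 + u2 * v1 - v1 * v2) * \<beta> =
        E u1 * E u2 + E v1 * E v2 * E c + (E u1 * E v2 + E u2 * E v1 - E v1 * E v2) * \<beta>"
    by (simp add: Eh)
  thus ?thesis using beta_rel by algebra
qed

lemma norm_nz:
  assumes "E u + E v * \<beta> \<noteq> 0" shows "u * u - u * v - v * v * c \<noteq> 0"
proof (cases "v = 0")
  case True
  hence "u \<noteq> 0" using assms by (simp add: Eh)
  thus ?thesis using True by simp
next
  case False
  have "v * v * poly g (- u / v) = u * u - u * v - v * v * c"
    unfolding g_def using False by (simp add: field_simps)
  thus ?thesis using False g_noroot by (metis mult_eq_0_iff)
qed

lemma TT_conj: "(E u + E v * \<beta>) * (E (u - v) + E (- v) * \<beta>) = E (u * u - u * v - v * v * c)"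
proof -
  have "E (u * u - u * v - v * v * c) = E u * E u - E u * E v - E v * E v * E c" by (simp add: Eh)
  moreover have "E (u - v) + E (- v) * \<beta> = E u - E v - E v * \<beta>" by (simp add: Eh)
  ultimately show ?thesis using beta_rel by algebra
qed

lemma TT_subfield: "is_subfield TT"
  unfolding is_subfield_def
proof (intro conjI ballI)
  show "0 \<in> TT" unfolding TT_def by (rule CollectI, rule exI[of _ 0], rule exI[of _ 0]) (simp add: Eh)
  show "1 \<in> TT" unfolding TT_def by (rule CollectI, rule exI[of _ 1], rule exI[of _ 0]) (simp add: Eh)
  fix x assume "x \<in> TT"
  then obtain u v where x: "x = E u + E v * \<beta>" unfolding TT_def by blast
  show "- x \<in> TT" unfolding TT_def x
    by (rule CollectI, rule exI[of _ "-u"], rule exI[of _ "-v"]) (simp add: Eh)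
  show "inverse x \<in> TT"
  proof (cases "x = 0")
    case True thus ?thesis using \<open>0 \<in> TT\<close> by simp
  next
    case False
    define N where "N = u * u - u * v - v * v * c"
    have N0: "N \<noteq> 0" using norm_nz False x N_def by simp
    have "x * (E (u - v) + E (- v) * \<beta>) = E N" using TT_conj x N_def by simp
    hence "inverse x = (E (u - v) + E (- v) * \<beta>) * inverse (E N)"
      using False N0 by (simp add: Eh field_simps)
    also have "\<dots> = E ((u - v) / N) + E (- v / N) * \<beta>" by (simp add: Eh divide_inverse algebra_simps)
    finally show ?thesis unfolding TT_def by blast
  qed
  fix y assume "y \<in> TT"
  then obtain u2 v2 where y: "y = E u2 + E v2 * \<beta>" unfolding TT_def by blast
  show "x + y \<in> TT" unfolding TT_def x y
    by (rule CollectI, rule exI[of _ "u + u2"], rule exI[of _ "v + v2"]) (simp add: Eh algebra_simps)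
  show "x * y \<in> TT" unfolding TT_def x y TT_mult by blast
qed

lemma roots_TT: "poly (map_poly E g) x = 0 \<Longrightarrow> x \<in> TT"
proof -
  assume "poly (map_poly E g) x = 0"
  hence "- E c + x * (1 + x) = 0" using ev_g by simp
  hence "(x - \<beta>) * (x + 1 + \<beta>) = 0" using beta_rel by algebra
  hence "x - \<beta> = 0 \<or> x + 1 + \<beta> = 0" by simp
  hence "x = \<beta> \<or> x = - 1 - \<beta>"
  proof (elim disjE)
    assume "x + 1 + \<beta> = 0" hence "x = - 1 - \<beta>" by algebra
    thus ?thesis ..
  qed simp
  thus "x \<in> TT"
  proof (elim disjE)
    assume "x = \<beta>" thus ?thesis unfolding TT_def by (intro CollectI exI[of _ 0] exI[of _ 1]) (simp add: Eh)
  next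
    assume "x = - 1 - \<beta>" thus ?thesis unfolding TT_def by (intro CollectI exI[of _ "-1"] exI[of _ "-1"]) (simp add: Eh)
  qed
qed

lemma range_TT: "E u \<in> TT" unfolding TT_def by (intro CollectI exI[of _ u] exI[of _ 0]) (simp add: Eh)

lemma S_sub_TT: "splitting_field_in E g \<subseteq> TT"
proof -
  have "range E \<union> {x. poly (map_poly E g) x = 0} \<subseteq> TT" using range_TT roots_TT by auto
  thus ?thesis unfolding splitting_field_in_def subfield_generated_def
    using TT_subfield by (intro Inter_lower) simp
qed

end



context L5 begin

definition "AA = {E (to_fract a) + E (to_fract b) * \<alpha> | a b. True}"

lemma ev_Et_pCons: "poly (map_poly (E \<circ> to_fract) (pCons a p)) y = E (to_fract a) + y * poly (map_poly (E \<circ> to_fract) p) y"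
  by (simp add: map_Et_pCons)

lemma alpha_sq: "\<alpha> * \<alpha> = - E \<gamma> - E \<delta> * \<alpha>" using root' by algebra

lemma adjoin_AA: "poly (map_poly (E \<circ> to_fract) p) \<alpha> \<in> AA"
proof (induction p)
  case 0
  show ?case unfolding AA_def by (intro CollectI exI[of _ 0]) (simp add: Eh)
next
  case (pCons c p)
  then obtain a b where ab: "poly (map_poly (E \<circ> to_fract) p) \<alpha> = E (to_fract a) + E (to_fract b) * \<alpha>"
    unfolding AA_def by blast
  have "poly (map_poly (E \<circ> to_fract) (pCons c p)) \<alpha> = E (to_fract c) + \<alpha> * (E (to_fract a) + E (to_fract b) * \<alpha>)"
    by (simp add: ev_Et_pCons ab)
  also have "\<dots> = E (to_fract (c - b * gm)) + E (to_fract (a - b * dl)) * \<alpha>"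
  proof -
    have "E (to_fract (c - b * gm)) = E (to_fract c) - E (to_fract b) * E \<gamma>" by (simp add: Eh \<gamma>_def)
    moreover have "E (to_fract (a - b * dl)) = E (to_fract a) - E (to_fract b) * E \<delta>" by (simp add: Eh \<delta>_def)
    ultimately show ?thesis using alpha_sq by algebra
  qed
  finally show ?case unfolding AA_def by blast
qed

lemma AA_integral:
  assumes y: "y = E (to_fract a) + E (to_fract b) * \<alpha>"
  shows "\<exists>p :: 'k poly poly. lead_coeff p = 1 \<and> poly (map_poly (E \<circ> to_fract) p) y = 0"
proof (intro exI conjI)
  let ?p = "[: a * a - a * b * dl + b * b * gm, b * dl - a - a, 1 :]"
  show "lead_coeff ?p = 1" by simp
  have "poly (map_poly (E \<circ> to_fract) ?p) y = E (to_fract (a * a - a * b * dl + b * b * gm)) + y * (E (to_fract (b * dl - a - a)) + y * E (to_fract 1))"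
    by (simp only: ev_Et_pCons map_poly_0 poly_0 mult_zero_right add_0_right)
  also have "\<dots> = E (to_fract a) * E (to_fract a) - E (to_fract a) * E (to_fract b) * E (to_fract dl) + E (to_fract b) * E (to_fract b) * E (to_fract gm)
     + y * ((E (to_fract b) * E (to_fract dl) - E (to_fract a) - E (to_fract a)) + y * 1)"
    by (simp only: to_fract_add to_fract_diff to_fract_mult to_fract_1 Eh(2-6))
  also have "\<dots> = 0" using alpha_sq[unfolded \<delta>_def \<gamma>_def] y by algebra
  finally show "poly (map_poly (E \<circ> to_fract) ?p) y = 0" .
qed

lemma beta_root: "poly (map_poly E g) \<beta> = 0"
proof -
  have "poly (map_poly E g) \<beta> = - E c + \<beta> * (1 + \<beta>)" by (rule ev_g)
  also have "\<dots> = 0" using beta_rel by algebra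
  finally show ?thesis .
qed

lemma sf_add: "is_subfield L \<Longrightarrow> x \<in> L \<Longrightarrow> y \<in> L \<Longrightarrow> x + y \<in> L"
  and sf_mult: "is_subfield L \<Longrightarrow> x \<in> L \<Longrightarrow> y \<in> L \<Longrightarrow> x * y \<in> L"
  and sf_0: "is_subfield L \<Longrightarrow> 0 \<in> L"
  unfolding is_subfield_def by auto

lemma poly_in_subfield:
  assumes L: "is_subfield L" and "range E \<subseteq> L" and "y \<in> L"
  shows "poly (map_poly (E \<circ> to_fract) p) y \<in> L"
proof (induction p)
  case 0 thus ?case using sf_0[OF L] by simp
next
  case (pCons c p)
  have "E (to_fract c) \<in> L" using assms by auto
  hence "E (to_fract c) + y * poly (map_poly (E \<circ> to_fract) p) y \<in> L"
    by (rule sf_add[OF L]) (rule sf_mult[OF L assms(3) pCons.IH])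
  thus ?case unfolding ev_Et_pCons .
qed

lemma adjoin_in_S: "poly (map_poly (E \<circ> to_fract) p) \<alpha> \<in> splitting_field_in E g"
  unfolding splitting_field_in_def subfield_generated_def
proof (rule InterI)
  fix L assume "L \<in> {L. range E \<union> {x. poly (map_poly E g) x = 0} \<subseteq> L \<and> is_subfield L}"
  hence L: "is_subfield L" "range E \<subseteq> L" "\<beta> \<in> L" using beta_root by auto
  have "E \<delta> \<in> L" using L by auto
  hence "\<alpha> \<in> L" using L alpha_eq sf_mult by metis
  thus "poly (map_poly (E \<circ> to_fract) p) \<alpha> \<in> L" using poly_in_subfield L by blast
qed

lemma AA_adjoin: "E (to_fract a) + E (to_fract b) * \<alpha> \<in> ring_adjoin (E \<circ> to_fract) \<alpha>"
  unfolding ring_adjoin_def by (rule CollectI, rule exI[of _ "[:a, b:]"]) (simp add: ev_Et_pCons Eh)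

end



lemma norm_aux:
  fixes u v c A B D dd G :: "'a::comm_ring_1"
  assumes "u*D = A" "v*D = dd*B" "G = dd*dd*c"
  shows "(u*u - u*v - v*v*c)*(D*D) = A*A - A*B*dd - B*B*G"
proof -
  have "(u*u - u*v - v*v*c)*(D*D) = (u*D)*(u*D) - (u*D)*(v*D) - (v*D)*(v*D)*c" by (simp add: algebra_simps)
  also have "\<dots> = A*A - A*(dd*B) - (dd*B)*(dd*B)*c" using assms by simp
  also have "\<dots> = A*A - A*B*dd - B*B*G" using assms by (simp add: algebra_simps)
  finally show ?thesis .
qed

context L5 begin

lemma ram: "\<forall>\<pi>. prime_elem \<pi> \<longrightarrow> \<pi> dvd dl \<longrightarrow> \<pi> dvd gm \<and> \<not> \<pi>^2 dvd gm"
  unfolding dl_def gm_def DD_def PP_def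
  using ram_cond[OF primes distinct e_pos coprime eps] by blast

lemma deg1_eq: "degree (r :: 'a::zero poly) \<le> 1 \<Longrightarrow> r = [:coeff r 0, coeff r 1:]"
  by (rule poly_eqI) (auto simp: coeff_pCons coeff_eq_0 split: nat.split)

lemma int_in_AA:
  assumes xS: "x \<in> splitting_field_in E g" and pm: "lead_coeff p = 1"
    and px: "poly (map_poly (E \<circ> to_fract) p) x = 0"
  shows "x \<in> AA"
proof -
  obtain u v where x: "x = E u + E v * \<beta>" using S_sub_TT xS unfolding TT_def by blast
  define P where "P = map_poly to_fract p"
  have PE: "poly (map_poly E P) x = 0" using px unfolding P_def
    by (subst map_poly_map_poly) (simp_all add: Eh)
  show ?thesis
  proof (cases "v = 0")
    case True
    hence xu: "x = E u" using x by (simp add: Eh)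
    have "E (poly P u) = 0" using PE xu ev_hom[OF hom] by metis
    hence "poly P u = 0" by (simp add: Eh)
    hence "[:-u,1:] dvd P" using poly_eq_0_iff_dvd by blast
    then obtain q where "P = [:-u,1:] * q" by (elim dvdE)
    hence "\<forall>i. coeff [:-u,1:] i \<in> range to_fract" using gauss_monic[OF pm, of "[:-u,1:]" q] P_def by simp
    hence "coeff [:-u,1:] 0 \<in> range to_fract" by blast
    then obtain a where "-u = to_fract a" by auto
    hence "u = to_fract (-a)" by (metis minus_minus to_fract_uminus)
    thus ?thesis unfolding AA_def using xu by (intro CollectI exI[of _ "-a"] exI[of _ 0]) (simp add: Eh)
  next
    case False
    define N where "N = u*u - u*v - v*v*c"
    define h where "h = [: N, v - u - u, 1 :]"
    have h0: "h \<noteq> 0" and hm: "lead_coeff h = 1" and dh: "degree h = 2" by (simp_all add: h_def)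
    have hx: "poly (map_poly E h) x = 0"
    proof -
      have "poly (map_poly E h) x = E N + x * (E (v - u - u) + x * E 1)"
        by (simp only: h_def map_hom_pCons[OF hom] poly_pCons map_poly_0 poly_0 mult_zero_right add_0_right)
      also have "\<dots> = E u*E u - E u*E v - E v*E v*E c + x*(E v - E u - E u + x*1)"
        by (simp only: N_def Eh(2-6))
      also have "\<dots> = 0" using x beta_rel by algebra
      finally show ?thesis .
    qed
    define r where "r = P mod h"
    have Pdiv: "P = h * (P div h) + r" unfolding r_def by (metis div_mult_mod_eq mult.commute)
    have "r = 0 \<or> degree r < degree h" unfolding r_def using degree_mod_less[OF h0] by blast
    hence "degree r \<le> 1" using dh by auto
    hence r_eq: "r = [:coeff r 0, coeff r 1:]" by (rule deg1_eq)
    have "poly (map_poly E P) x = poly (map_poly E h) x * poly (map_poly E (P div h)) x + poly (map_poly E r) x"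
      by (subst Pdiv) (simp only: map_hom_add[OF hom] map_hom_mult[OF hom] poly_add poly_mult)
    hence r0: "poly (map_poly E r) x = 0" using PE hx by simp
    have "poly (map_poly E r) x = E (coeff r 0) + x * E (coeff r 1)"
      by (subst r_eq) (simp add: map_hom_pCons[OF hom] Eh)
    hence "E (coeff r 0) + x * E (coeff r 1) = 0" using r0 by simp
    hence "E (coeff r 0 + u * coeff r 1) + E (v * coeff r 1) * \<beta> = 0"
      using x by (simp add: Eh algebra_simps)
    hence ind: "coeff r 0 + u * coeff r 1 = 0" "v * coeff r 1 = 0" using indep by blast+
    hence "coeff r 1 = 0" using False by simp
    hence "coeff r 0 = 0" using ind by simp
    hence "r = 0" using r_eq \<open>coeff r 1 = 0\<close> by simp
    hence "P = h * (P div h)" using Pdiv by simp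
    hence coeffs: "\<forall>i. coeff h i \<in> range to_fract" using gauss_monic[OF pm hm] P_def by metis
    have "v - u - u = v - (u + u)" by (simp add: algebra_simps)
    hence vuu: "v - u - u = v" using two_F by simp
    have "coeff h 1 \<in> range to_fract" using coeffs by blast
    then obtain V where V: "v = to_fract V" using vuu unfolding h_def by auto
    have "coeff h 0 \<in> range to_fract" using coeffs by blast
    then obtain M where M: "N = to_fract M" unfolding h_def by auto
    have dlt0: "to_fract dl \<noteq> 0" using dl0 by simp
    define w where "w = v / to_fract dl"
    obtain a b d where abd: "d \<noteq> 0" "u = to_fract a / to_fract d" "w = to_fract b / to_fract d"
      and cop: "\<forall>\<pi>. prime_elem \<pi> \<longrightarrow> \<pi> dvd a \<longrightarrow> \<pi> dvd b \<longrightarrow> \<not> \<pi> dvd d"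
      using minrep[of u w] by blast
    have D0: "to_fract d \<noteq> 0" using abd by simp
    have ud: "u * to_fract d = to_fract a" using abd D0 by simp
    have vd: "v * to_fract d = to_fract dl * to_fract b" using abd D0 dlt0 unfolding w_def
      by (simp add: field_simps)
    have "to_fract (V * d) = to_fract (dl * b)" using vd V by simp
    hence "V * d = dl * b" by (simp only: to_fract_eq_iff)
    hence h1: "d dvd dl * b" by (metis dvdI mult.commute)
    have gq: "to_fract gm = to_fract dl * to_fract dl * c" using gm_eq unfolding \<gamma>_def \<delta>_def
      by (simp add: power2_eq_square)
    have "N * (to_fract d * to_fract d) = to_fract a * to_fract a - to_fract a * to_fract b * to_fract dl - to_fract b * to_fract b * to_fract gm"
      using norm_aux[OF ud vd gq] unfolding N_def .
    hence "to_fract (M * d^2) = to_fract (a^2 - a * b * dl - b^2 * gm)"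
      using M by (simp add: power2_eq_square)
    hence "M * d^2 = a^2 - a * b * dl - b^2 * gm" by (simp only: to_fract_eq_iff)
    hence h2: "d^2 dvd a^2 - a * b * dl - b^2 * gm" by (metis dvdI mult.commute)
    have du: "is_unit d" using key_arith[OF abd(1) cop h1 h2 ram] .
    obtain a' where a': "a = d * a'" using du by (metis dvdE unit_imp_dvd)
    obtain b' where b': "b = d * b'" using du by (metis dvdE unit_imp_dvd)
    have ua: "u = to_fract a'" using abd(2) a' D0 by simp
    have wb: "w = to_fract b'" using abd(3) b' D0 by simp
    have "v = w * to_fract dl" unfolding w_def using dlt0 by simp
    hence "x = E (to_fract a') + E (to_fract b') * \<alpha>"
      using x ua wb alpha_eq unfolding \<delta>_def by (simp add: Eh ac_simps)
    thus ?thesis unfolding AA_def by blast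
  qed
qed

end



theorem lemma5p1:
  fixes emb :: "'k::{field,finite} poly fract \<Rightarrow> 'K::field"
    and s :: nat and Q :: "nat \<Rightarrow> 'k poly" and e :: "nat \<Rightarrow> nat"
    and n :: "'k poly" and \<epsilon> :: 'k and \<alpha> :: 'K
  assumes char2: "CHAR('k) = 2"
    and primes: "\<forall>i<s. lead_coeff (Q i) = 1 \<and> irreducible (Q i)"
    and distinct: "inj_on Q {..<s}"
    and e_pos: "\<forall>i<s. e i \<ge> 1"
    and coprime: "coprime n (\<Prod>i<s. Q i ^ (2 * e i - 1))"
    and irred: "irreducible [: - (to_fract n / to_fract (\<Prod>i<s. Q i ^ (2 * e i - 1))), 1, 1 :]"
    and hom: "is_ring_hom emb"
    and eps: "\<epsilon> \<noteq> 0"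
    and root: "poly (map_poly (emb \<circ> to_fract)
                 [: [:\<epsilon>\<^sup>2:] * (\<Prod>i<s. Q i) * n, [:\<epsilon>:] * (\<Prod>i<s. Q i ^ e i), 1 :]) \<alpha> = 0"
  shows "integral_closure_in (emb \<circ> to_fract)
           (splitting_field_in emb
              [: - (to_fract n / to_fract (\<Prod>i<s. Q i ^ (2 * e i - 1))), 1, 1 :])
         = ring_adjoin (emb \<circ> to_fract) \<alpha>"
proof -
  interpret L: L5 emb s Q e n \<epsilon> \<alpha>
    by (rule L5.intro) (rule assms)+
  show ?thesis
    unfolding L.g_alt[symmetric]
  proof (intro set_eqI iffI)
    fix x assume "x \<in> integral_closure_in (emb \<circ> to_fract) (splitting_field_in emb L.g)"
    then obtain p where "x \<in> splitting_field_in emb L.g" "lead_coeff p = 1"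
      "poly (map_poly (emb \<circ> to_fract) p) x = 0" unfolding integral_closure_in_def by blast
    hence "x \<in> L.AA" by (rule L.int_in_AA)
    thus "x \<in> ring_adjoin (emb \<circ> to_fract) \<alpha>" unfolding L.AA_def using L.AA_adjoin by blast
  next
    fix x assume "x \<in> ring_adjoin (emb \<circ> to_fract) \<alpha>"
    then obtain p where p: "x = poly (map_poly (emb \<circ> to_fract) p) \<alpha>" unfolding ring_adjoin_def by blast
    have xS: "x \<in> splitting_field_in emb L.g" using p L.adjoin_in_S by simp
    have "x \<in> L.AA" using p L.adjoin_AA by simp
    then obtain a b where "x = emb (to_fract a) + emb (to_fract b) * \<alpha>" unfolding L.AA_def by blast
    hence "\<exists>p :: 'k poly poly. lead_coeff p = 1 \<and> poly (map_poly (emb \<circ> to_fract) p) x = 0"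
      by (rule L.AA_integral)
    thus "x \<in> integral_closure_in (emb \<circ> to_fract) (splitting_field_in emb L.g)"
      unfolding integral_closure_in_def using xS by blast
  qed
qed


end
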